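(* Let $\mathbf{A}$ be a Mal'cev algebra with universe $\{0,1,2\}$. If $\mu$ is a congruence of $\mathbf{A}$ different from $0_A$ and $1_A$, then $\mu$ is the only such congruence of $\mathbf{A}$.
   Context: A Mal'cev algebra is an algebra with a term operation $d$ satisfying $d(y,x,x)\approx d(x,x,y)\approx y$. $0_A$ denotes the equality relation and $1_A=A^2$. *)

theory Defs
  imports Main
begin

text \<open>An algebra is given by a universe A and a set F of basic operations; each
operation is a pair (n, f) of its arity n and a function f on lists, meant to be
applied to lists of length n over A.\<close>

definition is_algebra :: "'a set \<Rightarrow> (nat \<times> ('a list \<Rightarrow> 'a)) set \<Rightarrow> bool" where
  "is_algebra A F \<longleftrightarrow> A \<noteq> {} \<and>
     (\<forall>(n, f) \<in> F. \<forall>xs. length xs = n \<and> set xs \<subseteq> A \<longrightarrow> f xs \<in> A)"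

inductive_set term_ops :: "(nat \<times> ('a list \<Rightarrow> 'a)) set \<Rightarrow> nat \<Rightarrow> ('a list \<Rightarrow> 'a) set"
  for F :: "(nat \<times> ('a list \<Rightarrow> 'a)) set" and n :: nat where
  proj: "i < n \<Longrightarrow> (\<lambda>xs. xs ! i) \<in> term_ops F n"
| comp: "(k, f) \<in> F \<Longrightarrow> length ts = k \<Longrightarrow> \<forall>t \<in> set ts. t \<in> term_ops F n
          \<Longrightarrow> (\<lambda>xs. f (map (\<lambda>t. t xs) ts)) \<in> term_ops F n"

definition malcev_algebra :: "'a set \<Rightarrow> (nat \<times> ('a list \<Rightarrow> 'a)) set \<Rightarrow> bool" where
  "malcev_algebra A F \<longleftrightarrow> is_algebra A F \<and>
     (\<exists>d \<in> term_ops F 3. \<forall>x \<in> A. \<forall>y \<in> A. d [y, x, x] = y \<and> d [x, x, y] = y)"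

definition congruence :: "'a set \<Rightarrow> (nat \<times> ('a list \<Rightarrow> 'a)) set \<Rightarrow> ('a \<times> 'a) set \<Rightarrow> bool" where
  "congruence A F \<theta> \<longleftrightarrow> equiv A \<theta> \<and>
     (\<forall>(n, f) \<in> F. \<forall>xs ys. length xs = n \<and> length ys = n \<and> set xs \<subseteq> A \<and> set ys \<subseteq> A \<and>
        list_all2 (\<lambda>x y. (x, y) \<in> \<theta>) xs ys \<longrightarrow> (f xs, f ys) \<in> \<theta>)"

end

theory Submission
  imports Defs
begin

lemma term_ops_closed:
  assumes "t \<in> term_ops F n" "is_algebra A F"
  shows "length xs = n \<Longrightarrow> set xs \<subseteq> A \<Longrightarrow> t xs \<in> A"
  using assms(1)
proof (induction t rule: term_ops.induct)
  case (proj i)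
  then show ?case by auto
next
  case (comp k f ts)
  have "set (map (\<lambda>t. t xs) ts) \<subseteq> A" using comp by auto
  moreover have "length (map (\<lambda>t. t xs) ts) = k" using comp by simp
  ultimately have "f (map (\<lambda>t. t xs) ts) \<in> A"
    using assms(2) comp(1) unfolding is_algebra_def by blast
  then show ?case by simp
qed

lemma term_ops_cong:
  assumes "t \<in> term_ops F n" "is_algebra A F" "congruence A F \<theta>"
  shows "length xs = n \<Longrightarrow> length ys = n \<Longrightarrow> set xs \<subseteq> A \<Longrightarrow> set ys \<subseteq> A \<Longrightarrow>
         list_all2 (\<lambda>x y. (x, y) \<in> \<theta>) xs ys \<Longrightarrow> (t xs, t ys) \<in> \<theta>"
  using assms(1)
proof (induction t rule: term_ops.induct)
  case (proj i)
  then show ?case by (simp add: list_all2_conv_all_nth)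
next
  case (comp k f ts)
  have A1: "set (map (\<lambda>t. t xs) ts) \<subseteq> A" "set (map (\<lambda>t. t ys) ts) \<subseteq> A"
    using comp term_ops_closed[OF _ assms(2)] by auto
  have L: "list_all2 (\<lambda>x y. (x, y) \<in> \<theta>) (map (\<lambda>t. t xs) ts) (map (\<lambda>t. t ys) ts)"
    using comp by (auto simp: list_all2_map1 list_all2_map2 list_all2_same)
  have H: "\<And>xs ys. length xs = k \<Longrightarrow> length ys = k \<Longrightarrow> set xs \<subseteq> A \<Longrightarrow> set ys \<subseteq> A \<Longrightarrow>
     list_all2 (\<lambda>x y. (x, y) \<in> \<theta>) xs ys \<Longrightarrow> (f xs, f ys) \<in> \<theta>"
    using assms(3) comp(1) unfolding congruence_def by fast
  show ?case using H[OF _ _ A1 L] comp(2) by simp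
qed

lemma permute:
  assumes "malcev_algebra A F" "congruence A F \<mu>" "congruence A F \<nu>"
    "(x, y) \<in> \<mu>" "(y, z) \<in> \<nu>"
  shows "\<exists>w. (x, w) \<in> \<nu> \<and> (w, z) \<in> \<mu>"
proof -
  have alg: "is_algebra A F" using assms(1) unfolding malcev_algebra_def by auto
  obtain d where d: "d \<in> term_ops F 3" "\<forall>x \<in> A. \<forall>y \<in> A. d [y, x, x] = y \<and> d [x, x, y] = y"
    using assms(1) unfolding malcev_algebra_def by auto
  have xyz: "x \<in> A" "y \<in> A" "z \<in> A"
    using assms(2-5) unfolding congruence_def equiv_def refl_on_def by auto
  have rm: "refl_on A \<mu>" "refl_on A \<nu>"
    using assms(2,3) unfolding congruence_def equiv_def by auto
  have sn: "sym \<nu>" using assms(3) unfolding congruence_def equiv_def by auto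
  have "(z, y) \<in> \<nu>" using sn assms(5) by (meson symD)
  have "(d [x, y, z], d [x, y, y]) \<in> \<nu>"
    using term_ops_cong[OF d(1) alg assms(3), of "[x,y,z]" "[x,y,y]"] xyz \<open>(z, y) \<in> \<nu>\<close> rm
    by (auto simp: refl_on_def)
  moreover have "(d [x, y, z], d [y, y, z]) \<in> \<mu>"
    using term_ops_cong[OF d(1) alg assms(2), of "[x,y,z]" "[y,y,z]"] xyz assms(4) rm
    by (auto simp: refl_on_def)
  moreover have "sym \<nu>" using assms(3) unfolding congruence_def equiv_def by auto
  ultimately show ?thesis using d(2) xyz by (metis symD)
qed
lemma half:
  fixes m n :: "'a \<Rightarrow> 'a \<Rightarrow> bool"
  assumes A: "A \<subseteq> {a, b, c}" "a \<in> A" "b \<in> A" "c \<in> A" "a \<noteq> b" "a \<noteq> c" "b \<noteq> c"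
   and ms: "\<forall>x\<in>A. \<forall>y\<in>A. m x y \<longrightarrow> m y x"
   and mt: "\<forall>x\<in>A. \<forall>y\<in>A. \<forall>z\<in>A. m x y \<longrightarrow> m y z \<longrightarrow> m x z"
   and nr: "\<forall>x\<in>A. n x x" and ns: "\<forall>x\<in>A. \<forall>y\<in>A. n x y \<longrightarrow> n y x"
   and nt: "\<forall>x\<in>A. \<forall>y\<in>A. \<forall>z\<in>A. n x y \<longrightarrow> n y z \<longrightarrow> n x z"
   and mnf: "\<exists>x\<in>A. \<exists>y\<in>A. \<not> m x y"
   and nnt: "\<exists>x\<in>A. \<exists>y\<in>A. x \<noteq> y \<and> n x y"
   and P: "\<forall>x\<in>A. \<forall>y\<in>A. \<forall>z\<in>A. m x y \<longrightarrow> n y z \<longrightarrow> (\<exists>w\<in>A. n x w \<and> m w z)"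
   and mr: "\<forall>x\<in>A. m x x"
   and mab: "m a b"
  shows "n a b"
proof -
  have full: False if "m a c"
  proof -
    have "m b a" using ms mab A by blast
    have "m c a" using ms that A by blast
    have "m b c" using mt \<open>m b a\<close> that A by blast
    have "m c b" using ms \<open>m b c\<close> A by blast
    have "\<forall>x\<in>A. \<forall>y\<in>A. m x y"
    proof (intro ballI)
      fix x y assume "x \<in> A" "y \<in> A"
      then have "x = a \<or> x = b \<or> x = c" "y = a \<or> y = b \<or> y = c" using A by auto
      then show "m x y" using mr A mab that \<open>m b a\<close> \<open>m c a\<close> \<open>m b c\<close> \<open>m c b\<close> by auto
    qed
    then show False using mnf by blast
  qed
  have nac: "\<not> m a c" using full by blast
  have nbc: "\<not> m b c"
  proof
    assume "m b c" then have "m a c" using mt mab A by blast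
    then show False using nac by blast
  qed
  have wc: "w = c" if "w \<in> A" "m w c" for w
  proof -
    have "w = a \<or> w = b \<or> w = c" using that A by auto
    then show ?thesis using that nac nbc by auto
  qed
  have c1: "n a b" if "n c b"
  proof -
    have "n b c" using ns that A by blast
    then obtain w where "w \<in> A" "n a w" "m w c" using P mab A by blast
    then have "n a c" using wc by blast
    then show ?thesis using nt that A by blast
  qed
  have c2: "n a b" if "n c a"
  proof -
    have "m b a" using ms mab A by blast
    have "n a c" using ns that A by blast
    then obtain w where "w \<in> A" "n b w" "m w c" using P \<open>m b a\<close> A by blast
    then have "n b c" using wc by blast
    then have "n b a" using nt that A by blast
    then show ?thesis using ns A by blast
  qed
  obtain x y where xy: "x \<in> A" "y \<in> A" "x \<noteq> y" "n x y" using nnt by blast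
  have "n y x" using ns xy by blast
  have "x = a \<or> x = b \<or> x = c" "y = a \<or> y = b \<or> y = c" using xy A by auto
  then show ?thesis using xy \<open>n y x\<close> c1 c2 ns A by blast
qed

lemma third:
  fixes x y :: nat
  assumes "x \<in> {0,1,2}" "y \<in> {0,1,2}" "x \<noteq> y"
  obtains c where "c \<in> {0,1,2::nat}" "c \<noteq> x" "c \<noteq> y" "{0,1,2} \<subseteq> {x, y, c}"
proof -
  have "x = 0 \<or> x = 1 \<or> x = 2" "y = 0 \<or> y = 1 \<or> y = 2" using assms(1,2) by auto
  then show ?thesis using that assms(3) by fastforce
qed

lemma equiv_facts:
  assumes "equiv A r"
  shows "\<forall>x\<in>A. (x, x) \<in> r" "\<forall>x\<in>A. \<forall>y\<in>A. (x, y) \<in> r \<longrightarrow> (y, x) \<in> r"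
    "\<forall>x\<in>A. \<forall>y\<in>A. \<forall>z\<in>A. (x, y) \<in> r \<longrightarrow> (y, z) \<in> r \<longrightarrow> (x, z) \<in> r"
    "r \<subseteq> A \<times> A"
proof -
  show "\<forall>x\<in>A. (x, x) \<in> r" using assms unfolding equiv_def refl_on_def by blast
  show "\<forall>x\<in>A. \<forall>y\<in>A. (x, y) \<in> r \<longrightarrow> (y, x) \<in> r" using assms unfolding equiv_def sym_def by blast
  show "\<forall>x\<in>A. \<forall>y\<in>A. \<forall>z\<in>A. (x, y) \<in> r \<longrightarrow> (y, z) \<in> r \<longrightarrow> (x, z) \<in> r"
    using assms unfolding equiv_def trans_def by blast
  show "r \<subseteq> A \<times> A" using assms by (rule equiv_type)
qed

lemma nontriv:
  assumes "equiv A r" "r \<noteq> Id_on A" "r \<noteq> A \<times> A"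
  shows "\<exists>x\<in>A. \<exists>y\<in>A. x \<noteq> y \<and> (x, y) \<in> r" "\<exists>x\<in>A. \<exists>y\<in>A. (x, y) \<notin> r"
proof -
  have s: "r \<subseteq> A \<times> A" "\<forall>x\<in>A. (x, x) \<in> r"
    by (rule equiv_facts(4)[OF assms(1)], rule equiv_facts(1)[OF assms(1)])
  show "\<exists>x\<in>A. \<exists>y\<in>A. x \<noteq> y \<and> (x, y) \<in> r"
  proof (rule ccontr)
    assume "\<not> ?thesis"
    then have "r = Id_on A" using s by (auto simp: Id_on_def)
    then show False using assms(2) by simp
  qed
  show "\<exists>x\<in>A. \<exists>y\<in>A. (x, y) \<notin> r" using s assms(3) by auto
qed

theorem lemma4p1:
  fixes F :: "(nat \<times> (nat list \<Rightarrow> nat)) set" and \<mu> :: "(nat \<times> nat) set"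
  assumes "malcev_algebra {0, 1, 2} F"
    and "congruence {0, 1, 2} F \<mu>"
    and "\<mu> \<noteq> Id_on {0, 1, 2}" and "\<mu> \<noteq> {0, 1, 2} \<times> {0, 1, 2}"
  shows "\<forall>\<nu>. congruence {0, 1, 2} F \<nu> \<and> \<nu> \<noteq> Id_on {0, 1, 2} \<and> \<nu> \<noteq> {0, 1, 2} \<times> {0, 1, 2}
           \<longrightarrow> \<nu> = \<mu>"
proof (intro allI impI)
  fix \<nu> :: "(nat \<times> nat) set"
  assume H: "congruence {0, 1, 2} F \<nu> \<and> \<nu> \<noteq> Id_on {0, 1, 2} \<and> \<nu> \<noteq> {0, 1, 2} \<times> {0, 1, 2}"
  have em: "equiv {0, 1, 2::nat} \<mu>" using assms(2) unfolding congruence_def by auto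
  have en: "equiv {0, 1, 2::nat} \<nu>" using H unfolding congruence_def by auto
  have hn: "\<nu> \<noteq> Id_on {0, 1, 2}" "\<nu> \<noteq> {0, 1, 2} \<times> {0, 1, 2}" using H by auto
  have P1: "\<forall>x\<in>{0,1,2::nat}. \<forall>y\<in>{0,1,2::nat}. \<forall>z\<in>{0,1,2::nat}. (x, y) \<in> \<mu> \<longrightarrow> (y, z) \<in> \<nu> \<longrightarrow> (\<exists>w\<in>{0,1,2::nat}. (x, w) \<in> \<nu> \<and> (w, z) \<in> \<mu>)"
  proof (intro ballI impI)
    fix x y z :: nat assume "x \<in> {0,1,2}" "(x, y) \<in> \<mu>" "(y, z) \<in> \<nu>"
    then obtain w where "(x, w) \<in> \<nu>" "(w, z) \<in> \<mu>" using permute[OF assms(1,2)] H by blast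
    moreover have "w \<in> {0,1,2}" using equiv_facts(4)[OF en] calculation(1) by auto
    ultimately show "\<exists>w\<in>{0,1,2::nat}. (x, w) \<in> \<nu> \<and> (w, z) \<in> \<mu>" by blast
  qed
  have P2: "\<forall>x\<in>{0,1,2::nat}. \<forall>y\<in>{0,1,2::nat}. \<forall>z\<in>{0,1,2::nat}. (x, y) \<in> \<nu> \<longrightarrow> (y, z) \<in> \<mu> \<longrightarrow> (\<exists>w\<in>{0,1,2::nat}. (x, w) \<in> \<mu> \<and> (w, z) \<in> \<nu>)"
  proof (intro ballI impI)
    fix x y z :: nat assume "x \<in> {0,1,2}" "(x, y) \<in> \<nu>" "(y, z) \<in> \<mu>"
    then obtain w where "(x, w) \<in> \<mu>" "(w, z) \<in> \<nu>" using permute[OF assms(1) _ assms(2)] H by blast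
    moreover have "w \<in> {0,1,2}" using equiv_facts(4)[OF em] calculation(1) by auto
    ultimately show "\<exists>w\<in>{0,1,2::nat}. (x, w) \<in> \<mu> \<and> (w, z) \<in> \<nu>" by blast
  qed
  have d1: "(x, y) \<in> \<nu>" if h: "x \<in> {0,1,2}" "y \<in> {0,1,2}" "(x, y) \<in> \<mu>" for x y
  proof (cases "x = y")
    case True then show ?thesis using equiv_facts(1)[OF en] h by blast
  next
    case False
    then obtain c where c: "c \<in> {0,1,2::nat}" "c \<noteq> x" "c \<noteq> y" "{0,1,2} \<subseteq> {x, y, c}"
      using third[OF h(1,2) False] by blast
    show ?thesis
      using half[where m="\<lambda>x y. (x, y) \<in> \<mu>" and n="\<lambda>x y. (x, y) \<in> \<nu>", OF c(4) h(1,2) c(1) False c(2,3)[symmetric]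
        equiv_facts(2,3)[OF em] equiv_facts(1-3)[OF en] nontriv(2)[OF em assms(3,4)]
        nontriv(1)[OF en hn] P1 equiv_facts(1)[OF em] h(3)] by simp
  qed
  have d2: "(x, y) \<in> \<mu>" if h: "x \<in> {0,1,2}" "y \<in> {0,1,2}" "(x, y) \<in> \<nu>" for x y
  proof (cases "x = y")
    case True then show ?thesis using equiv_facts(1)[OF em] h by blast
  next
    case False
    then obtain c where c: "c \<in> {0,1,2::nat}" "c \<noteq> x" "c \<noteq> y" "{0,1,2} \<subseteq> {x, y, c}"
      using third[OF h(1,2) False] by blast
    show ?thesis
      using half[where n="\<lambda>x y. (x, y) \<in> \<mu>" and m="\<lambda>x y. (x, y) \<in> \<nu>", OF c(4) h(1,2) c(1) False c(2,3)[symmetric]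
        equiv_facts(2,3)[OF en] equiv_facts(1-3)[OF em] nontriv(2)[OF en hn]
        nontriv(1)[OF em assms(3,4)] P2 equiv_facts(1)[OF en] h(3)] by simp
  qed
  show "\<nu> = \<mu>"
    using d1 d2 equiv_facts(4)[OF em] equiv_facts(4)[OF en] by auto
qed

end
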